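(* Let $\mu$ be a nontrivial probability measure on $\partial\mathbb{D}$ with $1\in\sigma_{\mathrm{ess}}(\mu)$, and for $t\ge0$ let $d\mu_t(\theta)=e^{2t\cos\theta}d\mu(\theta)/\int e^{2t\cos\theta}d\mu(\theta)$. Let $z_1^{(n)}(t),\dots,z_n^{(n)}(t)$ be the zeros of $\Phi_n(z;\mu_t)$. Then for all $n\ge1$ and $j=1,\dots,n$, $z_j^{(n)}(t)\to1$ as $t\to\infty$, and for all $n\ge0$, $\alpha_n(\mu_t)\to(-1)^n$ as $t\to\infty$.
   Context: Points of $\partial\mathbb{D}$ are written $e^{i\theta}$. A measure is nontrivial if its support is infinite. $\sigma_{\mathrm{ess}}(\mu)$ is the set of non-isolated points of $\mathrm{supp}\,\mu$. $\Phi_n(z;\nu)$ is the monic orthogonal polynomial of degree $n$ in $L^2(\nu)$, and $\alpha_n(\nu)=-\overline{\Phi_{n+1}(0;\nu)}$ are the Verblunsky coefficients (so that $\Phi_{n+1}(z)=z\Phi_n(z)-\overline{\alpha_n}z^n\overline{\Phi_n(1/\bar z)}$). The functions $\alpha_n(t)=\alpha_n(\mu_t)$ solve the Schur flow $\alpha_n'=(1-|\alpha_n|^2)(\alpha_{n+1}-\alpha_{n-1})$, $\alpha_{-1}\equiv-1$. *)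

theory Defs
  imports "HOL-Probability.Probability" "HOL-Computational_Algebra.Polynomial"
begin

text \<open>Measures on the unit circle are represented as Borel measures on the complex
plane that give no mass to the complement of the unit circle.\<close>

definition msupp :: "complex measure \<Rightarrow> complex set" where
  "msupp \<mu> = {z. \<forall>e>0. emeasure \<mu> (ball z e) \<noteq> 0}"

definition ess_supp :: "complex measure \<Rightarrow> complex set" where
  "ess_supp \<mu> = {z \<in> msupp \<mu>. z islimpt msupp \<mu>}"

definition nontrivial_measure :: "complex measure \<Rightarrow> bool" where
  "nontrivial_measure \<mu> \<longleftrightarrow> infinite (msupp \<mu>)"

text \<open>The deformed measure d mu_t = e^{2 t cos theta} d mu / normalisation; on the
circle z = e^{i theta}, cos theta = Re z.\<close>
definition mu_t :: "complex measure \<Rightarrow> real \<Rightarrow> complex measure" where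
  "mu_t \<mu> t = density \<mu> (\<lambda>z. ennreal (exp (2 * t * Re z) /
       (\<integral>w. exp (2 * t * Re w) \<partial>\<mu>)))"

definition OPUC :: "complex measure \<Rightarrow> nat \<Rightarrow> complex poly" where
  "OPUC \<nu> n = (THE p. degree p = n \<and> lead_coeff p = 1 \<and>
      (\<forall>k<n. (\<integral>z. poly p z * cnj (z ^ k) \<partial>\<nu>) = 0))"

definition verblunsky :: "complex measure \<Rightarrow> nat \<Rightarrow> complex" where
  "verblunsky \<nu> n = - cnj (poly (OPUC \<nu> (Suc n)) 0)"

end

theory Submission imports Defs "HOL-Computational_Algebra.Fundamental_Theorem_Algebra" begin

lemma poly_bound_sphere: "\<exists>K. \<forall>z\<in>sphere (0::complex) 1. cmod (poly p z) \<le> K"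
proof -
  have "compact (poly p ` sphere 0 1)"
    by (intro compact_continuous_image continuous_intros) auto
  then show ?thesis by (auto dest!: compact_imp_bounded simp: bounded_iff)
qed

lemma cont_bound_sphere:
  assumes "continuous_on UNIV (f :: complex \<Rightarrow> 'b::real_normed_vector)"
  shows "\<exists>K. \<forall>z\<in>sphere (0::complex) 1. norm (f z) \<le> K"
proof -
  have "compact (f ` sphere 0 1)"
    by (intro compact_continuous_image continuous_on_subset[OF assms]) auto
  then show ?thesis by (auto dest!: compact_imp_bounded simp: bounded_iff)
qed

lemma poly_contU: "continuous_on UNIV (poly (p::complex poly))"
  using continuous_on_poly[of UNIV "\<lambda>x. x" p] by (simp add: continuous_on_id)

lemma poly_meas[measurable]: "poly (p::complex poly) \<in> borel_measurable borel"
  by (intro borel_measurable_continuous_onI poly_contU)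

lemma monic_sub:
  fixes s :: "complex poly"
  assumes "s = 0 \<or> degree s < n"
  shows "degree (monom 1 n - s) = n \<and> lead_coeff (monom 1 n - s) = 1"
proof (cases "s = 0")
  case True then show ?thesis by (simp add: degree_monom_eq)
next
  case False
  then have ds: "degree s < n" using assms by auto
  have "degree (monom 1 n + (- s)) = n" using ds
    by (subst degree_add_eq_left) (simp_all add: degree_monom_eq)
  then have d: "degree (monom 1 n - s) = n" by simp
  moreover have "coeff (monom 1 n - s) n = 1" using ds by (simp add: coeff_eq_0)
  ultimately show ?thesis by simp
qed

locale circ_meas =
  fixes M :: "complex measure"
  assumes fin: "finite_measure M" and sets_M: "sets M = sets borel"
    and circ: "AE z in M. z \<in> sphere 0 1"
begin

lemma meas_M: "borel_measurable M = borel_measurable borel"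
  using sets_M measurable_cong_sets by blast

lemma integrable_bd:
  fixes f :: "complex \<Rightarrow> 'b::{banach,second_countable_topology}"
  assumes "f \<in> borel_measurable borel" "\<And>z. z \<in> sphere 0 1 \<Longrightarrow> norm (f z) \<le> K"
  shows "integrable M f"
proof -
  interpret finite_measure M by (rule fin)
  show ?thesis
  proof (rule integrable_const_bound[where B=K])
    show "AE x in M. norm (f x) \<le> K" using circ by eventually_elim (use assms(2) in auto)
    show "f \<in> borel_measurable M" by (subst measurable_cong_sets[OF sets_M refl]) (rule assms(1))
  qed
qed

lemma integrable_cont:
  fixes f :: "complex \<Rightarrow> 'b::{banach,second_countable_topology}"
  assumes "continuous_on UNIV f"
  shows "integrable M f"
proof -
  obtain K where "\<forall>z\<in>sphere (0::complex) 1. norm (f z) \<le> K"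
    using cont_bound_sphere[OF assms] by blast
  then show ?thesis
    by (intro integrable_bd[where K=K] borel_measurable_continuous_onI assms) auto
qed

end

locale wip = circ_meas +
  fixes g :: "complex \<Rightarrow> real"
  assumes g_meas[measurable]: "g \<in> borel_measurable borel" and g_nn: "\<And>z. 0 \<le> g z"
    and g_bd: "\<exists>G. \<forall>z\<in>sphere 0 1. g z \<le> G"
begin

definition IP :: "complex poly \<Rightarrow> complex poly \<Rightarrow> complex" where
  "IP p q = (\<integral>z. of_real (g z) * (poly p z * cnj (poly q z)) \<partial>M)"

definition N :: "complex poly \<Rightarrow> real" where
  "N p = (\<integral>z. g z * (cmod (poly p z))\<^sup>2 \<partial>M)"

lemma integrable_g:
  fixes f :: "complex \<Rightarrow> 'b::{banach,second_countable_topology, real_normed_algebra}"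
  assumes "continuous_on UNIV f"
  shows "integrable M (\<lambda>z. g z *\<^sub>R f z)"
proof -
  obtain K where K: "\<forall>z\<in>sphere (0::complex) 1. norm (f z) \<le> K"
    using cont_bound_sphere[OF assms] by blast
  obtain G where G: "\<forall>z\<in>sphere 0 1. g z \<le> G" using g_bd by blast
  show ?thesis
  proof (rule integrable_bd[where K="G*K"])
    show "(\<lambda>z. g z *\<^sub>R f z) \<in> borel_measurable borel"
      using borel_measurable_continuous_onI[OF assms] by measurable
    fix z :: complex assume z: "z \<in> sphere 0 1"
    have "norm (g z *\<^sub>R f z) = g z * norm (f z)" using g_nn[of z] by simp
    also have "\<dots> \<le> G * K"
    proof -
      have a: "g z \<le> G" using G z by auto
      have b: "norm (f z) \<le> K" using K z by auto
      have "0 \<le> G" using g_nn[of z] a by linarith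
      then show ?thesis using mult_mono[OF a b _ norm_ge_zero] by simp
    qed
    finally show "norm (g z *\<^sub>R f z) \<le> G * K" .
  qed
qed

lemma IP_int: "integrable M (\<lambda>z. of_real (g z) * (poly p z * cnj (poly q z)))"
  using integrable_g[of "\<lambda>z. poly p z * cnj (poly q z)"]
  by (simp add: scaleR_conv_of_real continuous_intros)

lemma N_int: "integrable M (\<lambda>z. g z * (cmod (poly p z))\<^sup>2)"
  using integrable_g[of "\<lambda>z. (cmod (poly p z))\<^sup>2"]
  by (simp add: continuous_intros)

lemma IP_add_left: "IP (p + q) r = IP p r + IP q r"
proof -
  have "(\<lambda>z. of_real (g z) * (poly (p+q) z * cnj (poly r z))) = (\<lambda>z. of_real (g z) * (poly p z * cnj (poly r z)) + of_real (g z) * (poly q z * cnj (poly r z)))"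
    by (simp add: algebra_simps fun_eq_iff)
  then show ?thesis unfolding IP_def using Bochner_Integration.integral_add[OF IP_int[of p r] IP_int[of q r]] by simp
qed

lemma IP_diff_left: "IP (p - q) r = IP p r - IP q r"
proof -
  have "(\<lambda>z. of_real (g z) * (poly (p-q) z * cnj (poly r z))) = (\<lambda>z. of_real (g z) * (poly p z * cnj (poly r z)) - of_real (g z) * (poly q z * cnj (poly r z)))"
    by (simp add: algebra_simps fun_eq_iff)
  then show ?thesis unfolding IP_def using Bochner_Integration.integral_diff[OF IP_int[of p r] IP_int[of q r]] by simp
qed

lemma IP_smult_left: "IP (smult c p) r = c * IP p r"
  unfolding IP_def
  by (subst integral_mult_right_zero[symmetric]) (simp add: algebra_simps)

lemma IP_cnj: "cnj (IP p q) = IP q p"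
proof -
  have eq: "(\<lambda>z. of_real (g z) * (poly q z * cnj (poly p z))) = (\<lambda>z. cnj (of_real (g z) * (poly p z * cnj (poly q z))))"
    by (simp add: mult_ac fun_eq_iff)
  show ?thesis unfolding IP_def eq by (rule Bochner_Integration.integral_cnj[symmetric])
qed

lemma IP_add_right: "IP r (p + q) = IP r p + IP r q"
  by (metis IP_add_left IP_cnj complex_cnj_add)

lemma IP_diff_right: "IP r (p - q) = IP r p - IP r q"
  by (metis IP_diff_left IP_cnj complex_cnj_diff)

lemma IP_smult_right: "IP r (smult c p) = cnj c * IP r p"
  by (metis IP_smult_left IP_cnj complex_cnj_mult)

lemma IP_zero_right[simp]: "IP p 0 = 0" by (simp add: IP_def)
lemma IP_zero_left[simp]: "IP 0 p = 0" by (simp add: IP_def)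

lemma IP_self: "IP p p = of_real (N p)"
proof -
  have "IP p p = (\<integral>z. of_real (g z * (cmod (poly p z))\<^sup>2) \<partial>M)"
    unfolding IP_def by (intro Bochner_Integration.integral_cong refl)
       (simp add: complex_norm_square[symmetric])
  then show ?thesis unfolding N_def by (simp only: integral_complex_of_real)
qed

lemma N_nonneg: "N p \<ge> 0"
  unfolding N_def by (rule integral_nonneg_AE, rule AE_I2, simp add: g_nn)

lemma IP_sum_right: "finite A \<Longrightarrow> IP p (\<Sum>a\<in>A. f a) = (\<Sum>a\<in>A. IP p (f a))"
  by (induction A rule: finite_induct) (auto simp: IP_add_right)

definition orth :: "complex poly \<Rightarrow> nat \<Rightarrow> bool" where
  "orth p n \<longleftrightarrow> (\<forall>q. (q = 0 \<or> degree q < n) \<longrightarrow> IP p q = 0)"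

lemma orth_monom: "orth p n \<longleftrightarrow> (\<forall>k<n. IP p (monom 1 k) = 0)"
proof
  assume "orth p n" then show "\<forall>k<n. IP p (monom 1 k) = 0"
    unfolding orth_def by (auto simp: degree_monom_eq)
next
  assume H: "\<forall>k<n. IP p (monom 1 k) = 0"
  show "orth p n" unfolding orth_def
  proof (intro allI impI)
    fix q :: "complex poly" assume q: "q = 0 \<or> degree q < n"
    show "IP p q = 0"
    proof (cases "q = 0")
      case False
      then have dq: "degree q < n" using q by auto
      have "IP p q = IP p (\<Sum>i\<le>degree q. monom (coeff q i) i)"
        by (simp add: poly_as_sum_of_monoms)
      also have "\<dots> = (\<Sum>i\<le>degree q. IP p (smult (coeff q i) (monom 1 i)))"
        by (simp add: IP_sum_right smult_monom)
      also have "\<dots> = 0"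
        using H dq by (intro sum.neutral) (auto simp: IP_smult_right)
      finally show ?thesis .
    qed simp
  qed
qed

lemma low_split:
  fixes q P :: "complex poly"
  assumes "degree q \<le> n" "degree P = n" "lead_coeff P = 1"
  shows "q - smult (coeff q n) P = 0 \<or> degree (q - smult (coeff q n) P) < n"
proof -
  let ?r = "q - smult (coeff q n) P"
  have "degree (smult (coeff q n) P) \<le> n" using degree_smult_le[of "coeff q n" P] assms(2) by simp
  then have "degree ?r \<le> n" by (rule degree_diff_le[OF assms(1)])
  moreover have "coeff ?r n = 0" using assms by simp
  ultimately show ?thesis
    by (metis le_neq_implies_less leading_coeff_0_iff)
qed

end

locale wip_pd = wip +
  assumes pd: "\<And>p. p \<noteq> 0 \<Longrightarrow> N p > 0"
begin

lemma IP_self_nz: "p \<noteq> 0 \<Longrightarrow> IP p p \<noteq> 0"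
  using pd[of p] by (simp add: IP_self)

lemma proj: "\<exists>r. (r = 0 \<or> degree r < n) \<and> orth (f - r) n"
proof (induction n arbitrary: f)
  case 0
  show ?case by (intro exI[of _ 0]) (auto simp: orth_def)
next
  case (Suc n)
  obtain r1 where r1: "r1 = 0 \<or> degree r1 < n" "orth (f - r1) n" using Suc by blast
  obtain s where s: "s = 0 \<or> degree s < n" "orth (monom 1 n - s) n" using Suc by blast
  define P where "P = monom 1 n - s"
  have degP: "degree P = n" and lcP: "lead_coeff P = 1"
    using monic_sub[OF s(1)] unfolding P_def by auto
  have oP: "orth P n" using s P_def by simp
  have Pnz: "P \<noteq> 0" using lcP by auto
  define c where "c = IP (f - r1) P / IP P P"
  define r where "r = r1 + smult c P"
  have dr: "degree r < Suc n"
  proof -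
    have "degree r1 \<le> n" using r1 by auto
    then have "degree r \<le> n" unfolding r_def using degP
      by (intro degree_add_le) (auto intro: order.trans[OF degree_smult_le])
    then show ?thesis by simp
  qed
  have fr: "f - r = (f - r1) - smult c P" by (simp add: r_def algebra_simps)
  have "orth (f - r) (Suc n)" unfolding orth_def
  proof (intro allI impI)
    fix q :: "complex poly" assume q: "q = 0 \<or> degree q < Suc n"
    show "IP (f - r) q = 0"
    proof (cases "q = 0")
      case False
      then have dq: "degree q \<le> n" using q by auto
      define b where "b = coeff q n"
      define q' where "q' = q - smult b P"
      have q': "q' = 0 \<or> degree q' < n" unfolding q'_def b_def by (rule low_split[OF dq degP lcP])
      have qq: "q = smult b P + q'" by (simp add: q'_def)
      have A: "IP (f - r) P = 0"
        unfolding fr IP_diff_left IP_smult_left c_def using IP_self_nz[OF Pnz] by simp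
      have B1: "IP (f - r1) q' = 0" using r1(2) q' unfolding orth_def by blast
      have B2: "IP P q' = 0" using oP q' unfolding orth_def by blast
      have "IP (f - r) q' = IP (f - r1) q' - c * IP P q'"
        by (simp only: fr IP_diff_left[of "f - r1"] IP_smult_left)
      then have B: "IP (f - r) q' = 0" using B1 B2 by simp
      show ?thesis unfolding qq IP_add_right IP_smult_right A B by simp
    qed simp
  qed
  then show ?case using dr by blast
qed

lemma ex_opuc: "\<exists>P. degree P = n \<and> lead_coeff P = 1 \<and> orth P n"
proof -
  obtain s where s: "s = 0 \<or> degree s < n" "orth (monom 1 n - s) n" using proj by blast
  define P where "P = monom 1 n - s"
  have "degree P = n \<and> lead_coeff P = 1" using monic_sub[OF s(1)] unfolding P_def .
  moreover have "orth P n" using s(2) unfolding P_def .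
  ultimately show ?thesis by blast
qed

lemma ex1_opuc: "\<exists>!p. degree p = n \<and> lead_coeff p = 1 \<and> (\<forall>k<n. IP p (monom 1 k) = 0)"
proof -
  obtain P where P: "degree P = n" "lead_coeff P = 1" "orth P n" using ex_opuc by blast
  show ?thesis
  proof (rule ex1I[of _ P])
    show "degree P = n \<and> lead_coeff P = 1 \<and> (\<forall>k<n. IP P (monom 1 k) = 0)"
      using P orth_monom by auto
    fix p assume H: "degree p = n \<and> lead_coeff p = 1 \<and> (\<forall>k<n. IP p (monom 1 k) = 0)"
    then have op: "orth p n" using orth_monom by auto
    have "p - smult (coeff p n) P = 0 \<or> degree (p - smult (coeff p n) P) < n"
      using H P by (intro low_split) auto
    moreover have "coeff p n = 1" using H by auto
    ultimately have d: "p - P = 0 \<or> degree (p - P) < n" by simp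
    have "IP (p - P) (p - P) = IP p (p - P) - IP P (p - P)" by (rule IP_diff_left)
    also have "\<dots> = 0"
    proof -
      have "IP p (p - P) = 0" using op d unfolding orth_def by blast
      moreover have "IP P (p - P) = 0" using P(3) d unfolding orth_def by blast
      ultimately show ?thesis by simp
    qed
    finally show "p = P" by (metis IP_self_nz right_minus_eq)
  qed
qed


lemma sq_sum_le: "((x::real) + y)\<^sup>2 \<le> 2 * x\<^sup>2 + 2 * y\<^sup>2"
proof -
  have "0 \<le> (x - y)\<^sup>2" by simp
  then show ?thesis by (simp add: power2_eq_square algebra_simps)
qed

lemma remez: "\<exists>C\<ge>0. \<forall>q. (q = 0 \<or> degree q < m) \<longrightarrow> (\<forall>z\<in>sphere 0 1. (cmod (poly q z))\<^sup>2 \<le> C * N q)"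
proof (induction m)
  case 0
  show ?case by (intro exI[of _ 0]) auto
next
  case (Suc m)
  obtain C where C0: "C \<ge> 0" and C: "\<And>q z. q = 0 \<or> degree q < m \<Longrightarrow> z \<in> sphere 0 1 \<Longrightarrow> (cmod (poly q z))\<^sup>2 \<le> C * N q"
    using Suc by blast
  obtain s where s: "s = 0 \<or> degree s < m" "orth (monom 1 m - s) m" using proj by blast
  define P where "P = monom 1 m - s"
  have degP: "degree P = m" and lcP: "lead_coeff P = 1"
    using monic_sub[OF s(1)] unfolding P_def by auto
  have oP: "orth P m" using s(2) unfolding P_def .
  have Pnz: "P \<noteq> 0" using lcP by auto
  have NP: "N P > 0" using pd[OF Pnz] .
  obtain K where K: "\<forall>z\<in>sphere (0::complex) 1. cmod (poly P z) \<le> K" using poly_bound_sphere by blast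
  define C' where "C' = 2 * K\<^sup>2 / N P + 2 * C"
  have C'0: "C' \<ge> 0" unfolding C'_def using NP C0 by simp
  have "\<forall>q. (q = 0 \<or> degree q < Suc m) \<longrightarrow> (\<forall>z\<in>sphere 0 1. (cmod (poly q z))\<^sup>2 \<le> C' * N q)"
  proof (intro allI impI ballI)
    fix q :: "complex poly" and z :: complex
    assume q: "q = 0 \<or> degree q < Suc m" and z: "z \<in> sphere 0 1"
    show "(cmod (poly q z))\<^sup>2 \<le> C' * N q"
    proof (cases "q = 0")
      case True then show ?thesis by (simp add: N_def)
    next
      case False
      then have dq: "degree q \<le> m" using q by auto
      define b where "b = coeff q m"
      define r where "r = q - smult b P"
      have r: "r = 0 \<or> degree r < m" unfolding r_def b_def by (rule low_split[OF dq degP lcP])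
      have qq: "q = smult b P + r" by (simp add: r_def)
      have IPPr: "IP P r = 0" using oP r unfolding orth_def by blast
      have IPrP: "IP r P = 0" using IP_cnj[of P r] IPPr by simp
      have "of_real (N q) = IP q q" by (simp add: IP_self)
      also have "\<dots> = b * cnj b * IP P P + IP r r"
        unfolding qq IP_add_left IP_add_right IP_smult_left IP_smult_right IPPr IPrP
        by (simp add: algebra_simps)
      also have "\<dots> = of_real ((cmod b)\<^sup>2 * N P + N r)"
        by (simp add: IP_self complex_norm_square[symmetric])
      finally have Nq: "N q = (cmod b)\<^sup>2 * N P + N r" by (simp only: of_real_eq_iff)
      have "cmod (poly q z) = cmod (b * poly P z + poly r z)" by (simp add: qq)
      also have "\<dots> \<le> cmod b * cmod (poly P z) + cmod (poly r z)"
        by (metis norm_mult norm_triangle_ineq)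
      also have "\<dots> \<le> cmod b * K + cmod (poly r z)"
        using K z by (simp add: mult_left_mono)
      finally have "(cmod (poly q z))\<^sup>2 \<le> (cmod b * K + cmod (poly r z))\<^sup>2"
        by (simp add: power_mono)
      also have "\<dots> \<le> 2 * (cmod b * K)\<^sup>2 + 2 * (cmod (poly r z))\<^sup>2" by (rule sq_sum_le)
      also have "\<dots> \<le> 2 * (cmod b)\<^sup>2 * K\<^sup>2 + 2 * C * N r"
        using C[OF r z] by (simp add: power_mult_distrib)
      also have "\<dots> \<le> C' * N q"
      proof -
        have e: "C' * N q = 2 * (cmod b)\<^sup>2 * K\<^sup>2 + 2 * C * N r + (2 * K\<^sup>2 * N r / N P + 2 * C * (cmod b)\<^sup>2 * N P)"
          unfolding C'_def Nq using NP by (simp add: field_simps)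
        have "0 \<le> 2 * K\<^sup>2 * N r / N P + 2 * C * (cmod b)\<^sup>2 * N P"
          using NP C0 N_nonneg[of r] by simp
        then show ?thesis unfolding e by simp
      qed
      finally show ?thesis .
    qed
  qed
  then show ?case using C'0 by blast
qed

end

definition wt :: "complex measure \<Rightarrow> real \<Rightarrow> complex \<Rightarrow> real" where
  "wt \<mu> t z = exp (2 * t * Re z) / (\<integral>w. exp (2 * t * Re w) \<partial>\<mu>)"

lemma supp_zero:
  fixes p :: "complex poly"
  assumes S: "sets \<mu> = sets borel" and U: "open U" and inf: "infinite (msupp \<mu> \<inter> U)"
    and ae: "AE z in \<mu>. z \<in> U \<longrightarrow> poly p z = 0"
  shows "p = 0"
proof (rule ccontr)
  assume p: "p \<noteq> 0"
  have fin: "finite {z. poly p z = 0}" using poly_roots_finite[OF p] .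
  have "infinite ((msupp \<mu> \<inter> U) - {z. poly p z = 0})" using Diff_infinite_finite[OF fin inf] .
  then obtain x where "x \<in> (msupp \<mu> \<inter> U) - {z. poly p z = 0}"
    using infinite_imp_nonempty by blast
  then have x: "x \<in> msupp \<mu>" "x \<in> U" "poly p x \<noteq> 0" by auto
  have "open (U - {z. poly p z = 0})" using U finite_imp_closed[OF fin] by (rule open_Diff)
  moreover have "x \<in> U - {z. poly p z = 0}" using x by auto
  ultimately obtain e where e: "e > 0" "ball x e \<subseteq> U - {z. poly p z = 0}"
    using open_contains_ball by blast
  have sp: "space \<mu> = UNIV" using sets_eq_imp_space_eq[OF S] by simp
  have "AE z in \<mu>. \<not> (z \<in> ball x e)" using ae by eventually_elim (use e in auto)
  then have "emeasure \<mu> {z \<in> space \<mu>. z \<in> ball x e} = 0" by (rule emeasure_eq_0_AE)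
  then have "emeasure \<mu> (ball x e) = 0" using sp by (simp add: ball_def)
  then show False using x(1) e(1) unfolding msupp_def by auto
qed

lemma root_prod_bound:
  fixes p :: "complex poly"
  assumes "degree p = N" "lead_coeff p = 1" "\<forall>z. poly p z = 0 \<longrightarrow> cmod (z - 1) < \<epsilon>" "\<epsilon> \<le> 1"
  shows "cmod (poly p 0 - (-1)^N) \<le> \<epsilon> * N * 2^N"
  using assms
proof (induction N arbitrary: p)
  case 0
  then show ?case by (simp add: poly_0_coeff_0)
next
  case (Suc N)
  have "\<not> constant (poly p)" using Suc.prems(1) by (simp add: constant_degree)
  then obtain z0 where z0: "poly p z0 = 0" using fundamental_theorem_of_algebra by blast
  then obtain q where pq: "p = [:-z0, 1:] * q" using poly_eq_0_iff_dvd by (metis dvdE)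
  have pnz: "p \<noteq> 0" using Suc.prems(2) by auto
  then have qnz: "q \<noteq> 0" using pq by auto
  have dq: "degree q = N" using Suc.prems(1) pq degree_mult_eq[of "[:-z0, 1:]" q] qnz by simp
  have lq: "lead_coeff q = 1" using Suc.prems(2) unfolding pq lead_coeff_mult by simp
  have rq: "\<forall>z. poly q z = 0 \<longrightarrow> cmod (z - 1) < \<epsilon>" using Suc.prems(3) pq by simp
  have IH: "cmod (poly q 0 - (-1)^N) \<le> \<epsilon> * N * 2^N" using Suc.IH[OF dq lq rq Suc.prems(4)] .
  have e0: "cmod (z0 - 1) < \<epsilon>" using Suc.prems(3) z0 by blast
  then have epos: "\<epsilon> > 0" by (meson le_less_trans norm_ge_zero)
  have cz0: "cmod z0 \<le> 1 + \<epsilon>" using e0 norm_triangle_ineq2[of z0 1] by simp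
  define a where "a = poly q 0"
  define s :: complex where "s = (-1)^N"
  have cs: "cmod s = 1" by (simp add: s_def norm_power)
  have "poly p 0 - (-1)^Suc N = -(z0 * (a - s) + (z0 - 1) * s)"
    by (simp add: pq a_def s_def algebra_simps)
  then have "cmod (poly p 0 - (-1)^Suc N) \<le> cmod z0 * cmod (a - s) + cmod (z0 - 1) * cmod s"
    by (metis norm_minus_cancel norm_mult norm_triangle_ineq)
  also have "\<dots> \<le> (1 + \<epsilon>) * (\<epsilon> * N * 2^N) + \<epsilon>"
    using IH cz0 e0 cs epos unfolding a_def s_def[symmetric]
    by (intro add_mono mult_mono) auto
  also have "\<dots> \<le> \<epsilon> * Suc N * 2^Suc N"
  proof -
    have "(1 + \<epsilon>) * (\<epsilon> * N * 2^N) \<le> 2 * (\<epsilon> * N * 2^N)"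
      using Suc.prems(4) epos by (intro mult_right_mono) auto
    moreover have "\<epsilon> \<le> 2 * \<epsilon> * 2^N"
    proof -
      have h: "(1::real) \<le> 2^N" by simp
      have h1: "\<epsilon> * 1 \<le> \<epsilon> * 2^N" using mult_left_mono[OF h] epos by simp
      have h2: "0 \<le> \<epsilon> * 2^N" using epos by simp
      have "2 * \<epsilon> * 2^N = 2 * (\<epsilon> * 2^N)" by simp
      then show ?thesis using h1 h2 by linarith
    qed
    ultimately show ?thesis by (simp add: algebra_simps)
  qed
  finally show ?case .
qed




locale setup4 =
  fixes \<mu> :: "complex measure"
  assumes P: "prob_space \<mu>" and S: "sets \<mu> = sets borel"
    and C0: "emeasure \<mu> (- sphere 0 1) = 0"
    and NT: "nontrivial_measure \<mu>" and E1: "1 \<in> ess_supp \<mu>"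
begin

lemma space_mu: "space \<mu> = UNIV" using sets_eq_imp_space_eq[OF S] by simp

lemma circ_AE: "AE z in \<mu>. z \<in> sphere 0 1"
proof -
  have N: "- sphere 0 1 \<in> sets \<mu>" using S by (simp add: borel_open open_Compl)
  have E: "{x \<in> space \<mu>. \<not> x \<in> sphere 0 1} = - sphere 0 1" using space_mu by auto
  show ?thesis using AE_iff_measurable[OF N E] C0 by simp
qed

lemma cm: "circ_meas \<mu>"
  using P S circ_AE unfolding circ_meas_def prob_space_def by auto

interpretation CM: circ_meas \<mu> by (rule cm)

lemma meas1: "1 = measure \<mu> (space \<mu>)"
  using prob_space.prob_space[OF P] by simp

lemma Z_pos: "(\<integral>w. exp (2 * t * Re w) \<partial>\<mu>) > 0"
proof -
  have int: "integrable \<mu> (\<lambda>w. exp (2 * t * Re w))"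
    by (rule CM.integrable_cont) (intro continuous_intros)
  have "(\<integral>w. exp (- 2 * \<bar>t\<bar>) \<partial>\<mu>) \<le> (\<integral>w. exp (2 * t * Re w) \<partial>\<mu>)"
  proof (rule integral_mono_AE[OF _ int])
    show "integrable \<mu> (\<lambda>w. exp (- 2 * \<bar>t\<bar>))" by (rule CM.integrable_cont) (intro continuous_intros)
    show "AE x in \<mu>. exp (- 2 * \<bar>t\<bar>) \<le> exp (2 * t * Re x)"
      using circ_AE
    proof eventually_elim
      case (elim x)
      have "\<bar>Re x\<bar> \<le> 1" using abs_Re_le_cmod[of x] elim by simp
      then have "\<bar>t\<bar> * \<bar>Re x\<bar> \<le> \<bar>t\<bar>" by (intro mult_left_le) simp_all
      then have "\<bar>t * Re x\<bar> \<le> \<bar>t\<bar>" by (simp add: abs_mult)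
      then have "- \<bar>t\<bar> \<le> t * Re x" using abs_ge_minus_self[of "t * Re x"] by linarith
      then show ?case by simp
    qed
  qed
  moreover have "(\<integral>w. exp (- 2 * \<bar>t\<bar>) \<partial>\<mu>) = exp (- 2 * \<bar>t\<bar>)"
    using meas1 by simp
  ultimately show ?thesis using exp_gt_zero[of "- 2 * \<bar>t\<bar>"] by linarith
qed

lemma wt_pos: "wt \<mu> t z > 0"
  unfolding wt_def using Z_pos by simp

lemma wt_cont: "continuous_on UNIV (wt \<mu> t)"
  unfolding wt_def using Z_pos[of t] by (intro continuous_intros) auto

lemma wt_wip: "wip \<mu> (wt \<mu> t)"
proof -
  obtain K where K: "\<forall>z\<in>sphere (0::complex) 1. norm (wt \<mu> t z) \<le> K"
    using cont_bound_sphere[OF wt_cont] by blast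
  show ?thesis
  proof (rule wip.intro[OF cm], rule wip_axioms.intro)
    show "wt \<mu> t \<in> borel_measurable borel" by (rule borel_measurable_continuous_onI[OF wt_cont])
    show "\<And>z. 0 \<le> wt \<mu> t z" using wt_pos less_imp_le by blast
    show "\<exists>G. \<forall>z\<in>sphere 0 1. wt \<mu> t z \<le> G" using K by (intro exI[of _ K]) auto
  qed
qed

lemma wpd: "wip_pd \<mu> (wt \<mu> t)"
proof (rule wip_pd.intro[OF wt_wip], rule wip_pd_axioms.intro)
  interpret W: wip \<mu> "wt \<mu> t" by (rule wt_wip)
  fix p :: "complex poly" assume p: "p \<noteq> 0"
  show "W.N p > 0"
  proof (rule ccontr)
    assume "\<not> W.N p > 0"
    then have "W.N p = 0" using W.N_nonneg[of p] by simp
    then have "AE z in \<mu>. wt \<mu> t z * (cmod (poly p z))\<^sup>2 = 0"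
      unfolding W.N_def
      by (subst (asm) integral_nonneg_eq_0_iff_AE[OF W.N_int]) (auto intro!: AE_I2 mult_nonneg_nonneg W.g_nn)
    then have "AE z in \<mu>. z \<in> UNIV \<longrightarrow> poly p z = 0"
      by eventually_elim (metis UNIV_I less_irrefl mult_eq_0_iff wt_pos zero_eq_power2 norm_eq_zero)
    moreover have "infinite (msupp \<mu> \<inter> UNIV)" using NT unfolding nontrivial_measure_def by simp
    ultimately have "p = 0" using supp_zero[OF S open_UNIV] by blast
    then show False using p by simp
  qed
qed

lemma ind_pd:
  assumes r: "\<rho> > 0"
  shows "wip_pd \<mu> (indicator (ball 1 \<rho>))"
proof -
  have W: "wip \<mu> (indicator (ball 1 \<rho>))"
  proof (rule wip.intro[OF cm], rule wip_axioms.intro)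
    show "indicator (ball 1 \<rho>) \<in> borel_measurable borel"
      by (rule borel_measurable_indicator) (simp add: borel_open)
    show "\<And>z. (0::real) \<le> indicator (ball 1 \<rho>) z" by (simp add: indicator_def)
    show "\<exists>G. \<forall>z\<in>sphere 0 1. (indicator (ball 1 \<rho>) z::real) \<le> G"
      by (intro exI[of _ 1]) (simp add: indicator_def)
  qed
  show ?thesis
  proof (rule wip_pd.intro[OF W], rule wip_pd_axioms.intro)
    interpret W: wip \<mu> "indicator (ball 1 \<rho>)" by (rule W)
    fix p :: "complex poly" assume p: "p \<noteq> 0"
    show "W.N p > 0"
    proof (rule ccontr)
      assume "\<not> W.N p > 0"
      then have "W.N p = 0" using W.N_nonneg[of p] by simp
      then have "AE z in \<mu>. indicator (ball 1 \<rho>) z * (cmod (poly p z))\<^sup>2 = 0"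
        unfolding W.N_def
        by (subst (asm) integral_nonneg_eq_0_iff_AE[OF W.N_int]) (auto intro!: AE_I2 W.g_nn)
      then have "AE z in \<mu>. z \<in> ball 1 \<rho> \<longrightarrow> poly p z = 0"
        by eventually_elim (auto simp: indicator_def)
      moreover have "infinite (msupp \<mu> \<inter> ball 1 \<rho>)"
        using E1 r unfolding ess_supp_def islimpt_eq_infinite_ball by auto
      ultimately have "p = 0" using supp_zero[OF S open_ball] by blast
      then show False using p by simp
    qed
  qed
qed

lemma opuc_props:
  "degree (OPUC (mu_t \<mu> t) n) = n \<and> lead_coeff (OPUC (mu_t \<mu> t) n) = 1 \<and>
   wip.orth \<mu> (wt \<mu> t) (OPUC (mu_t \<mu> t) n) n"
proof -
  interpret W: wip_pd \<mu> "wt \<mu> t" by (rule wpd)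
  have mt: "mu_t \<mu> t = density \<mu> (\<lambda>z. ennreal (wt \<mu> t z))" unfolding mu_t_def wt_def ..
  have eq: "(\<integral>z. poly p z * cnj (z ^ k) \<partial>(mu_t \<mu> t)) = W.IP p (monom 1 k)" for p k
  proof -
    have m1: "(\<lambda>z. poly p z * cnj (z ^ k)) \<in> borel_measurable \<mu>"
      by (subst measurable_cong_sets[OF S refl]) (intro borel_measurable_continuous_onI continuous_intros poly_contU)
    have m2: "wt \<mu> t \<in> borel_measurable \<mu>"
      by (subst measurable_cong_sets[OF S refl]) (rule borel_measurable_continuous_onI[OF wt_cont])
    show ?thesis unfolding mt W.IP_def
      by (subst integral_density[OF m1 m2]) (auto intro!: AE_I2 less_imp_le[OF wt_pos] simp: scaleR_conv_of_real poly_monom)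
  qed
  define P where "P = (THE p. degree p = n \<and> lead_coeff p = 1 \<and> (\<forall>k<n. W.IP p (monom 1 k) = 0))"
  have eqn: "OPUC (mu_t \<mu> t) n = P"
    unfolding OPUC_def eq P_def ..
  have H: "degree P = n \<and> lead_coeff P = 1 \<and> (\<forall>k<n. W.IP P (monom 1 k) = 0)"
    unfolding P_def by (rule theI'[OF W.ex1_opuc[of n]])
  show ?thesis unfolding eqn W.orth_monom using H .
qed


lemma Re_sphere:
  assumes "z \<in> sphere (0::complex) 1"
  shows "Re z = 1 - (cmod (z - 1))\<^sup>2 / 2"
proof -
  have "(cmod z)\<^sup>2 = 1" using assms by simp
  then have "(Re z)\<^sup>2 + (Im z)\<^sup>2 = 1" by (simp add: cmod_power2)
  moreover have "(cmod (z - 1))\<^sup>2 = (Re z - 1)\<^sup>2 + (Im z)\<^sup>2" by (simp add: cmod_power2)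
  ultimately show ?thesis by (simp add: power2_eq_square algebra_simps)
qed

lemma keyK:
  assumes e: "e > 0"
  shows "\<exists>T. \<forall>t\<ge>T. \<forall>q. q \<noteq> 0 \<longrightarrow> degree q \<le> m \<longrightarrow>
     (\<integral>z. wt \<mu> t z * cmod (z - 1) * (cmod (poly q z))\<^sup>2 \<partial>\<mu>) < e * (\<integral>z. wt \<mu> t z * (cmod (poly q z))\<^sup>2 \<partial>\<mu>)"
proof -
  define \<delta> where "\<delta> = e / 2"
  define \<rho> where "\<rho> = \<delta> / 2"
  define a where "a = 1 - \<delta>\<^sup>2 / 2"
  define b where "b = 1 - \<rho>\<^sup>2 / 2"
  have d0: "\<delta> > 0" using e by (simp add: \<delta>_def)
  have r0: "\<rho> > 0" using d0 by (simp add: \<rho>_def)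
  have ba: "b - a = 3 * \<delta>\<^sup>2 / 8" by (simp add: a_def b_def \<rho>_def power2_eq_square field_simps)
  have ab: "b - a > 0" unfolding ba using d0 by simp
  interpret B: wip_pd \<mu> "indicator (ball 1 \<rho>)" by (rule ind_pd[OF r0])
  obtain C where C0: "C \<ge> 0" and C: "\<And>q z. q = 0 \<or> degree q < Suc m \<Longrightarrow> z \<in> sphere 0 1 \<Longrightarrow> (cmod (poly q z))\<^sup>2 \<le> C * B.N q"
    using B.remez[of "Suc m"] by blast
  define T where "T = max 0 (ln (2 * C / \<delta> + 1) / (2 * (b - a)))"
  show ?thesis
  proof (intro exI[of _ T] allI impI)
    fix t :: real and q :: "complex poly"
    assume tT: "T \<le> t" and qnz: "q \<noteq> 0" and dq: "degree q \<le> m"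
    have t0: "0 \<le> t" using tT by (simp add: T_def)
    define Z where "Z = (\<integral>w. exp (2 * t * Re w) \<partial>\<mu>)"
    have Z0: "Z > 0" using Z_pos by (simp add: Z_def)
    have wtE: "\<And>z. wt \<mu> t z = exp (2 * t * Re z) / Z" by (simp add: wt_def Z_def)
    define IB where "IB = B.N q"
    have IB0: "IB > 0" using B.pd[OF qnz] by (simp add: IB_def)
    define Q where "Q = (\<lambda>z. (cmod (poly q z))\<^sup>2)"
    have Q0: "\<And>z. Q z \<ge> 0" by (simp add: Q_def)
    have Cq: "\<And>z. z \<in> sphere 0 1 \<Longrightarrow> Q z \<le> C * IB" using C[of q] dq by (auto simp: IB_def Q_def)
    have w0: "\<And>z. wt \<mu> t z \<ge> 0" using wt_pos less_imp_le by blast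
    define R where "R = (\<integral>z. wt \<mu> t z * Q z \<partial>\<mu>)"
    define L where "L = (\<integral>z. wt \<mu> t z * cmod (z - 1) * Q z \<partial>\<mu>)"
    define K0 where "K0 = 2 * exp (2 * t * a) / Z * C * IB"
    have K00: "K0 \<ge> 0" unfolding K0_def using Z0 C0 IB0 by simp
    have intR: "integrable \<mu> (\<lambda>z. wt \<mu> t z * Q z)"
      unfolding Q_def by (intro CM.integrable_cont continuous_intros wt_cont poly_contU)
    have intL: "integrable \<mu> (\<lambda>z. wt \<mu> t z * cmod (z - 1) * Q z)"
      unfolding Q_def by (intro CM.integrable_cont continuous_intros wt_cont poly_contU)
    have pw1: "wt \<mu> t z * cmod (z - 1) * Q z \<le> \<delta> * (wt \<mu> t z * Q z) + K0"
      if z: "z \<in> sphere 0 1" for z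
    proof (cases "cmod (z - 1) < \<delta>")
      case True
      have "wt \<mu> t z * cmod (z - 1) * Q z = cmod (z - 1) * (wt \<mu> t z * Q z)" by simp
      also have "\<dots> \<le> \<delta> * (wt \<mu> t z * Q z)"
        using True w0[of z] Q0[of z] by (intro mult_right_mono) auto
      finally show ?thesis using K00 by linarith
    next
      case False
      have "\<delta>\<^sup>2 \<le> (cmod (z - 1))\<^sup>2" using False d0 by (intro power_mono) auto
      then have Rea: "Re z \<le> a" using Re_sphere[OF z] by (simp add: a_def)
      have "exp (2 * t * Re z) \<le> exp (2 * t * a)" using Rea t0 by (simp add: mult_left_mono)
      then have wa: "wt \<mu> t z \<le> exp (2 * t * a) / Z" unfolding wtE using Z0 by (simp add: divide_right_mono)
      have c2: "cmod (z - 1) \<le> 2" using norm_triangle_ineq4[of z 1] z by simp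
      have nn1: "0 \<le> exp (2 * t * a) / Z" using Z0 by simp
      have m1: "wt \<mu> t z * cmod (z - 1) \<le> exp (2 * t * a) / Z * 2"
        by (rule mult_mono[OF wa c2 nn1 norm_ge_zero])
      have "wt \<mu> t z * cmod (z - 1) * Q z \<le> (exp (2 * t * a) / Z * 2) * (C * IB)"
        by (rule mult_mono[OF m1 Cq[OF z]]) (use Z0 Q0[of z] in auto)
      also have "\<dots> = K0" by (simp add: K0_def)
      finally have "wt \<mu> t z * cmod (z - 1) * Q z \<le> K0" .
      moreover have "0 \<le> \<delta> * (wt \<mu> t z * Q z)" using d0 w0[of z] Q0[of z] by simp
      ultimately show ?thesis by linarith
    qed
    have LR: "L \<le> \<delta> * R + K0"
    proof -
      have "L \<le> (\<integral>z. \<delta> * (wt \<mu> t z * Q z) + K0 \<partial>\<mu>)"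
        unfolding L_def
      proof (rule integral_mono_AE[OF intL])
        show "integrable \<mu> (\<lambda>z. \<delta> * (wt \<mu> t z * Q z) + K0)"
          by (rule Bochner_Integration.integrable_add[OF integrable_mult_right[OF intR] CM.integrable_cont[OF continuous_on_const]])
        show "AE z in \<mu>. wt \<mu> t z * cmod (z - 1) * Q z \<le> \<delta> * (wt \<mu> t z * Q z) + K0"
          using circ_AE by eventually_elim (rule pw1)
      qed
      also have "\<dots> = \<delta> * R + K0"
        unfolding R_def using intR meas1 CM.integrable_cont[OF continuous_on_const[of UNIV K0]]
        by (subst Bochner_Integration.integral_add) auto
      finally show ?thesis .
    qed
    have RB: "exp (2 * t * b) / Z * IB \<le> R"
    proof -
      have "(\<integral>z. exp (2 * t * b) / Z * (indicator (ball 1 \<rho>) z * Q z) \<partial>\<mu>) \<le> R"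
        unfolding R_def
      proof (rule integral_mono_AE[OF _ intR])
        show "integrable \<mu> (\<lambda>z. exp (2 * t * b) / Z * (indicator (ball 1 \<rho>) z * Q z))"
          using B.N_int[of q] unfolding Q_def by (intro integrable_mult_right)
        show "AE z in \<mu>. exp (2 * t * b) / Z * (indicator (ball 1 \<rho>) z * Q z) \<le> wt \<mu> t z * Q z"
          using circ_AE
        proof eventually_elim
          case (elim z)
          show ?case
          proof (cases "z \<in> ball 1 \<rho>")
            case True
            then have "cmod (z - 1) < \<rho>" by (simp add: dist_norm norm_minus_commute)
            then have "(cmod (z - 1))\<^sup>2 \<le> \<rho>\<^sup>2" by (intro power_mono) auto
            then have "b \<le> Re z" using Re_sphere[OF elim] by (simp add: b_def)
            then have "exp (2 * t * b) \<le> exp (2 * t * Re z)" using t0 by (simp add: mult_left_mono)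
            then have "exp (2 * t * b) / Z \<le> wt \<mu> t z" unfolding wtE using Z0 by (simp add: divide_right_mono)
            then have "exp (2 * t * b) / Z * Q z \<le> wt \<mu> t z * Q z" using Q0[of z] by (rule mult_right_mono)
            then show ?thesis using True by simp
          next
            case False
            then show ?thesis using w0[of z] Q0[of z] by simp
          qed
        qed
      qed
      moreover have "(\<integral>z. exp (2 * t * b) / Z * (indicator (ball 1 \<rho>) z * Q z) \<partial>\<mu>) = exp (2 * t * b) / Z * IB"
        unfolding IB_def B.N_def Q_def by (rule integral_mult_right_zero)
      ultimately show ?thesis by linarith
    qed
    have key: "2 * C * exp (2 * t * a) < \<delta> * exp (2 * t * b)"
    proof -
      have "ln (2 * C / \<delta> + 1) / (2 * (b - a)) \<le> t" using tT by (simp add: T_def)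
      then have "ln (2 * C / \<delta> + 1) \<le> t * (2 * (b - a))" using ab by (simp add: divide_le_eq)
      then have "exp (ln (2 * C / \<delta> + 1)) \<le> exp (2 * t * (b - a))" by (simp add: mult_ac)
      moreover have "exp (ln (2 * C / \<delta> + 1)) = 2 * C / \<delta> + 1"
      proof -
        have "0 \<le> 2 * C / \<delta>" using C0 d0 by simp
        then show ?thesis by simp
      qed
      ultimately have h: "2 * C / \<delta> + 1 \<le> exp (2 * t * (b - a))" by simp
      have "exp (2 * t * b) = exp (2 * t * a) * exp (2 * t * (b - a))"
        by (simp add: exp_add[symmetric] algebra_simps)
      then have eqd: "\<delta> * exp (2 * t * b) = exp (2 * t * a) * (\<delta> * exp (2 * t * (b - a)))" by simp
      moreover have "\<delta> * exp (2 * t * (b - a)) \<ge> 2 * C + \<delta>"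
      proof -
        have "\<delta> * (2 * C / \<delta> + 1) = 2 * C + \<delta>" using d0 by (simp add: field_simps)
        moreover have "\<delta> * (2 * C / \<delta> + 1) \<le> \<delta> * exp (2 * t * (b - a))"
          using mult_left_mono[OF h, of \<delta>] d0 by simp
        ultimately show ?thesis by linarith
      qed
      then have "exp (2 * t * a) * (2 * C + \<delta>) \<le> exp (2 * t * a) * (\<delta> * exp (2 * t * (b - a)))"
        by (rule mult_left_mono) simp
      then have "\<delta> * exp (2 * t * b) \<ge> exp (2 * t * a) * (2 * C + \<delta>)"
        unfolding eqd .
      moreover have "exp (2 * t * a) * (2 * C + \<delta>) = 2 * C * exp (2 * t * a) + \<delta> * exp (2 * t * a)"
        by (simp add: algebra_simps)
      moreover have "\<delta> * exp (2 * t * a) > 0" using d0 by simp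
      ultimately show ?thesis by linarith
    qed
    have "K0 < \<delta> * (exp (2 * t * b) / Z * IB)"
    proof -
      have "K0 = (2 * C * exp (2 * t * a)) * (IB / Z)" by (simp add: K0_def)
      also have "\<dots> < (\<delta> * exp (2 * t * b)) * (IB / Z)"
        using key IB0 Z0 by (intro mult_strict_right_mono) auto
      also have "\<dots> = \<delta> * (exp (2 * t * b) / Z * IB)" by simp
      finally show ?thesis .
    qed
    also have "\<dots> \<le> \<delta> * R" using RB d0 by (intro mult_left_mono) auto
    finally have "L < 2 * \<delta> * R" using LR by linarith
    then have "L < e * R" by (simp add: \<delta>_def)
    then show "(\<integral>z. wt \<mu> t z * cmod (z - 1) * (cmod (poly q z))\<^sup>2 \<partial>\<mu>) < e * (\<integral>z. wt \<mu> t z * (cmod (poly q z))\<^sup>2 \<partial>\<mu>)"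
      unfolding L_def R_def Q_def .
  qed
qed


lemma zeros:
  assumes n: "n \<ge> 1" and e: "e > 0"
  shows "\<exists>T. \<forall>t\<ge>T. \<forall>z. poly (OPUC (mu_t \<mu> t) n) z = 0 \<longrightarrow> cmod (z - 1) < e"
proof -
  obtain T where T: "\<And>t q. t \<ge> T \<Longrightarrow> q \<noteq> 0 \<Longrightarrow> degree q \<le> n - 1 \<Longrightarrow>
     (\<integral>z. wt \<mu> t z * cmod (z - 1) * (cmod (poly q z))\<^sup>2 \<partial>\<mu>) < e * (\<integral>z. wt \<mu> t z * (cmod (poly q z))\<^sup>2 \<partial>\<mu>)"
    using keyK[OF e, of "n - 1"] by blast
  show ?thesis
  proof (intro exI[of _ T] allI impI)
    fix t z0 assume tT: "T \<le> t" and root: "poly (OPUC (mu_t \<mu> t) n) z0 = 0"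
    interpret W: wip_pd \<mu> "wt \<mu> t" by (rule wpd)
    define \<Phi> where "\<Phi> = OPUC (mu_t \<mu> t) n"
    have props: "degree \<Phi> = n" "lead_coeff \<Phi> = 1" "W.orth \<Phi> n"
      using opuc_props[of t n] unfolding \<Phi>_def by auto
    obtain q where pq: "\<Phi> = [:-z0, 1:] * q"
      using root poly_eq_0_iff_dvd unfolding \<Phi>_def[symmetric] by (metis dvdE)
    have Pnz: "\<Phi> \<noteq> 0" using props(2) by auto
    then have qnz: "q \<noteq> 0" using pq by auto
    have dq: "degree q = n - 1" using props(1) pq degree_mult_eq[of "[:-z0, 1:]" q] qnz by simp
    then have dqn: "degree q < n" using n by simp
    have orth0: "W.IP \<Phi> q = 0" using props(3) dqn unfolding W.orth_def by blast
    define F where "F = (\<lambda>z. wt \<mu> t z * (cmod (poly q z))\<^sup>2)"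
    have F0: "\<And>z. F z \<ge> 0" unfolding F_def using wt_pos less_imp_le by (simp add: less_imp_le)
    have Fc: "continuous_on UNIV F" unfolding F_def by (intro continuous_intros wt_cont poly_contU)
    have int1: "integrable \<mu> (\<lambda>z. (z - z0) * of_real (F z))"
      by (intro CM.integrable_cont continuous_intros Fc)
    have int2: "integrable \<mu> (\<lambda>z. (z0 - 1) * of_real (F z))"
      by (intro CM.integrable_cont continuous_intros Fc)
    have IPf: "W.IP \<Phi> q = (\<integral>z. (z - z0) * of_real (F z) \<partial>\<mu>)"
      unfolding W.IP_def
    proof (intro Bochner_Integration.integral_cong refl)
      fix z
      have "poly q z * cnj (poly q z) = of_real ((cmod (poly q z))\<^sup>2)" by (rule complex_norm_square[symmetric])
      then show "of_real (wt \<mu> t z) * (poly \<Phi> z * cnj (poly q z)) = (z - z0) * of_real (F z)"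
        unfolding pq F_def by (simp add: algebra_simps)
    qed
    define R where "R = (\<integral>z. F z \<partial>\<mu>)"
    have R0: "R > 0" using W.pd[OF qnz] unfolding R_def F_def W.N_def .
    have "(\<integral>z. (z - 1) * of_real (F z) \<partial>\<mu>) = (\<integral>z. (z - z0) * of_real (F z) + (z0 - 1) * of_real (F z) \<partial>\<mu>)"
      by (intro Bochner_Integration.integral_cong refl) (simp add: algebra_simps)
    also have "\<dots> = W.IP \<Phi> q + (z0 - 1) * of_real R"
      unfolding IPf R_def by (subst Bochner_Integration.integral_add[OF int1 int2]) simp
    also have "\<dots> = (z0 - 1) * of_real R" using orth0 by simp
    finally have eqI: "(\<integral>z. (z - 1) * of_real (F z) \<partial>\<mu>) = (z0 - 1) * of_real R" .
    have "cmod (z0 - 1) * R = cmod ((z0 - 1) * of_real R)" using R0 by (simp add: norm_mult)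
    also have "\<dots> \<le> (\<integral>z. norm ((z - 1) * of_real (F z)) \<partial>\<mu>)"
      unfolding eqI[symmetric] by (rule integral_norm_bound)
    also have "\<dots> = (\<integral>z. wt \<mu> t z * cmod (z - 1) * (cmod (poly q z))\<^sup>2 \<partial>\<mu>)"
    proof (intro Bochner_Integration.integral_cong refl)
      fix z
      show "norm ((z - 1) * of_real (F z)) = wt \<mu> t z * cmod (z - 1) * (cmod (poly q z))\<^sup>2"
      proof -
        have h: "cmod (complex_of_real (F z)) = F z" using F0[of z] by simp
        show ?thesis unfolding norm_mult h by (simp add: F_def mult_ac)
      qed
    qed
    also have "\<dots> < e * R"
      using T[OF tT qnz] dq unfolding R_def F_def by simp
    finally show "cmod (z0 - 1) < e" using R0 by simp
  qed
qed

end

theorem theorem4p1: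
  fixes \<mu> :: "complex measure"
  assumes "prob_space \<mu>"
    and "sets \<mu> = sets borel"
    and "emeasure \<mu> (- sphere 0 1) = 0"
    and "nontrivial_measure \<mu>"
    and "1 \<in> ess_supp \<mu>"
  shows "(\<forall>n\<ge>1. \<forall>e>0. \<forall>\<^sub>F t in at_top.
            \<forall>z. poly (OPUC (mu_t \<mu> t) n) z = 0 \<longrightarrow> cmod (z - 1) < e)
       \<and> (\<forall>n. ((\<lambda>t. verblunsky (mu_t \<mu> t) n) \<longlongrightarrow> (-1) ^ n) at_top)"
proof -
  interpret setup4 \<mu> unfolding setup4_def using assms by blast
  have A: "\<forall>n\<ge>1. \<forall>e>0. \<forall>\<^sub>F t in at_top.
            \<forall>z. poly (OPUC (mu_t \<mu> t) n) z = 0 \<longrightarrow> cmod (z - 1) < e"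
    using zeros unfolding eventually_at_top_linorder by blast
  have B: "((\<lambda>t. verblunsky (mu_t \<mu> t) n) \<longlongrightarrow> (-1) ^ n) at_top" for n
  proof (rule tendstoI)
    fix e :: real assume e: "e > 0"
    define \<epsilon> where "\<epsilon> = min 1 (e / (2 * real (Suc n) * 2 ^ Suc n))"
    have \<epsilon>0: "\<epsilon> > 0" using e by (simp add: \<epsilon>_def)
    have \<epsilon>1: "\<epsilon> \<le> 1" by (simp add: \<epsilon>_def)
    have \<epsilon>e: "\<epsilon> * real (Suc n) * 2 ^ Suc n < e"
    proof -
      have pos: "2 * real (Suc n) * 2 ^ Suc n > 0" by simp
      have "\<epsilon> \<le> e / (2 * real (Suc n) * 2 ^ Suc n)" by (simp add: \<epsilon>_def)
      then have "\<epsilon> * (real (Suc n) * 2 ^ Suc n) \<le> e / (2 * real (Suc n) * 2 ^ Suc n) * (real (Suc n) * 2 ^ Suc n)"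
        by (rule mult_right_mono) simp
      also have "\<dots> = e / 2" using pos by (simp add: field_simps)
      finally show ?thesis using e by (simp add: mult.assoc)
    qed
    obtain T where T: "\<And>t z. t \<ge> T \<Longrightarrow> poly (OPUC (mu_t \<mu> t) (Suc n)) z = 0 \<Longrightarrow> cmod (z - 1) < \<epsilon>"
      using zeros[OF _ \<epsilon>0, of "Suc n"] by auto
    show "\<forall>\<^sub>F t in at_top. dist (verblunsky (mu_t \<mu> t) n) ((-1) ^ n) < e"
      unfolding eventually_at_top_linorder
    proof (intro exI[of _ T] allI impI)
      fix t assume tT: "T \<le> t"
      define \<Phi> where "\<Phi> = OPUC (mu_t \<mu> t) (Suc n)"
      have props: "degree \<Phi> = Suc n" "lead_coeff \<Phi> = 1"
        using opuc_props[of t "Suc n"] unfolding \<Phi>_def by auto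
      have bnd: "cmod (poly \<Phi> 0 - (-1) ^ Suc n) \<le> \<epsilon> * real (Suc n) * 2 ^ Suc n"
        using root_prod_bound[OF props] T[OF tT] \<epsilon>1 unfolding \<Phi>_def by blast
      have eq1: "- cnj (poly \<Phi> 0) - (-1) ^ n = - cnj (poly \<Phi> 0 - (-1) ^ Suc n)"
        by simp
      have "dist (verblunsky (mu_t \<mu> t) n) ((-1) ^ n) = cmod (poly \<Phi> 0 - (-1) ^ Suc n)"
        unfolding verblunsky_def \<Phi>_def[symmetric] dist_norm eq1 by (simp only: norm_minus_cancel complex_mod_cnj)
      then show "dist (verblunsky (mu_t \<mu> t) n) ((-1) ^ n) < e" using bnd \<epsilon>e by linarith
    qed
  qed
  show ?thesis using A B by blast
qed

end
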